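(* Let $(Y_{i\,j})_{i,j\in\mathbb N}$ be i.i.d. real random variables with $\mathbb E[Y_{1\,1}]=0$, $\mathbb E[Y_{1\,1}^2]=1$, let $l\in\mathbb N$ and assume $\mathbb E[Y_{1\,1}^{2l}]<\infty$. Let $V_{l+1}\subset\mathbb N$ with $\#V_{l+1}=l+1$ and let $\mathbf i,\mathbf k\in V_{l+1}^l$ with $\{i_1,\dots,i_l\}\cup\{k_1,\dots,k_l\}=V_{l+1}$. Then $$\mathbb E\big[(Y_{i_1\,k_1}Y_{i_2\,k_1})\cdots(Y_{i_{l-1}\,k_{l-1}}Y_{i_l\,k_{l-1}})(Y_{i_l\,k_l}Y_{i_1\,k_l})\big]=\mathbb 1_{G_{\langle\mathbf i,\mathbf k\rangle}\in\mathcal T_{V_{l+1}}}.$$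
   Context: $\langle\mathbf i,\mathbf k\rangle=(i_1,k_1,\dots,i_l,k_l)$. For a finite $V\subset\mathbb N$ and $N\ge1$, a route through $V$ of length $N$ is a sequence $\mathbf i\in V^N$ whose set of entries equals $V$; its circuit multigraph $G_{\mathbf i}$ has vertex set $V$ and edges $1,\dots,N$, edge $k<N$ from $i_k$ to $i_{k+1}$, edge $N$ from $i_N$ to $i_1$; $\mathcal C_{V,N}$ is the set of these. A directed multigraph is balanced if its edges split into pairs $(e,e')$ with the head of $e$ the tail of $e'$ and vice versa. $\mathcal T_{V_{l+1}}$ is the set of balanced $G\in\mathcal C_{V_{l+1},2l}$ (balanced trees). *)

theory Defs
  imports "HOL-Probability.Probability"
begin

text \<open>A directed multigraph: vertex set, edge set, tail map, head map.\<close>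
type_synonym 'v mgraph = "'v set \<times> nat set \<times> (nat \<Rightarrow> 'v) \<times> (nat \<Rightarrow> 'v)"

text \<open>Circuit multigraph of a route xs (edges 0..N-1, edge e from xs!e to xs!((e+1) mod N);
  this is the paper's edge e+1, and edge N-1 goes from the last entry to the first).\<close>
definition circuit_graph :: "'v list \<Rightarrow> 'v mgraph" where
  "circuit_graph xs = (set xs, {..<length xs}, (\<lambda>e. xs ! e), (\<lambda>e. xs ! (Suc e mod length xs)))"

definition is_route :: "'v set \<Rightarrow> nat \<Rightarrow> 'v list \<Rightarrow> bool" where
  "is_route V N xs \<longleftrightarrow> finite V \<and> N \<ge> 1 \<and> length xs = N \<and> set xs = V"

definition circuits :: "'v set \<Rightarrow> nat \<Rightarrow> 'v mgraph set" where
  "circuits V N = {circuit_graph xs | xs. is_route V N xs}"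

definition balanced :: "'v mgraph \<Rightarrow> bool" where
  "balanced G \<longleftrightarrow> (case G of (V, E, tail, head) \<Rightarrow>
     (\<exists>f. \<forall>e\<in>E. f e \<in> E \<and> f e \<noteq> e \<and> f (f e) = e \<and> head e = tail (f e) \<and> head (f e) = tail e))"

definition balanced_trees :: "'v set \<Rightarrow> 'v mgraph set" where
  "balanced_trees V = {G \<in> circuits V (2 * (card V - 1)). balanced G}"

definition interleave :: "'v list \<Rightarrow> 'v list \<Rightarrow> 'v list" where
  "interleave is ks = concat (map (\<lambda>(a, b). [a, b]) (zip is ks))"

end

theory Submission imports Defs begin

lemma ext_step:
  assumes "card T \<le> c + card (G0 - F)" "G0 \<subseteq> G1" "finite G1"
    and "x \<notin> T \<Longrightarrow> \<exists>E \<in> G1 - F. E \<notin> G0" "finite T"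
  shows "card (insert x T) \<le> c + card (G1 - F)"
proof (cases "x \<in> T")
  case True
  have "card (G0 - F) \<le> card (G1 - F)" using assms by (intro card_mono) auto
  then show ?thesis using assms True by (simp add: insert_absorb)
next
  case False
  then obtain E where E: "E \<in> G1 - F" "E \<notin> G0" using assms by blast
  have "G0 - F \<subset> G1 - F" using E assms by auto
  then have "card (G0 - F) < card (G1 - F)" using assms by (intro psubset_card_mono) auto
  then show ?thesis using assms False by simp
qed

lemma walk_count_aux:
  fixes w :: "nat \<Rightarrow> 'v"
  assumes "finite S" "\<forall>E\<in>F. E \<subseteq> S"
  shows "m \<in> {i..i+d} \<Longrightarrow> w m \<in> S \<Longrightarrow>
    card (S \<union> w ` {i..i+d}) \<le> card S + card ((\<lambda>j. {w j, w (Suc j)}) ` {i..<i+d} - F)"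
proof (induction d arbitrary: i)
  case 0
  then have "S \<union> w ` {i..i+0} = S" by auto
  then show ?case by simp
next
  case (Suc d)
  let ?U = "\<lambda>j. {w j, w (Suc j)}"
  show ?case
  proof (cases "m = i")
    case False
    then have m: "m \<in> {Suc i..Suc i + d}" using Suc.prems by auto
    have IH: "card (S \<union> w ` {Suc i..Suc i+d}) \<le> card S + card (?U ` {Suc i..<Suc i+d} - F)"
      using Suc.IH[OF m Suc.prems(2)] .
    have eq: "S \<union> w ` {i..i + Suc d} = insert (w i) (S \<union> w ` {Suc i..Suc i+d})"
    proof -
      have "{i..i + Suc d} = insert i {Suc i..Suc i+d}" by auto
      then show ?thesis by auto
    qed
    show ?thesis unfolding eq
    proof (rule ext_step[OF IH])
      show "?U ` {Suc i..<Suc i + d} \<subseteq> ?U ` {i..<i + Suc d}" by auto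
      show "finite (?U ` {i..<i + Suc d})" by auto
      show "finite (S \<union> w ` {Suc i..Suc i + d})" using assms by auto
      assume nin: "w i \<notin> S \<union> w ` {Suc i..Suc i + d}"
      have "?U i \<notin> F" using nin assms by auto
      moreover have "?U i \<notin> ?U ` {Suc i..<Suc i + d}"
      proof
        assume "?U i \<in> ?U ` {Suc i..<Suc i + d}"
        then obtain j where j: "j \<in> {Suc i..<Suc i + d}" "?U i = ?U j" by auto
        then have "w i \<in> {w j, w (Suc j)}" by auto
        then show False using nin j by auto
      qed
      ultimately show "\<exists>E\<in>?U ` {i..<i + Suc d} - F. E \<notin> ?U ` {Suc i..<Suc i + d}"
        by (intro bexI[of _ "?U i"]) auto
    qed
  next
    case True
    then have m: "m \<in> {i..i + d}" by auto
    have IH: "card (S \<union> w ` {i..i+d}) \<le> card S + card (?U ` {i..<i+d} - F)"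
      using Suc.IH[OF m Suc.prems(2)] .
    have eq: "S \<union> w ` {i..i + Suc d} = insert (w (Suc (i+d))) (S \<union> w ` {i..i+d})"
    proof -
      have "{i..i + Suc d} = insert (Suc (i+d)) {i..i+d}" by auto
      then show ?thesis by auto
    qed
    show ?thesis unfolding eq
    proof (rule ext_step[OF IH])
      show "?U ` {i..<i + d} \<subseteq> ?U ` {i..<i + Suc d}" by auto
      show "finite (?U ` {i..<i + Suc d})" by auto
      show "finite (S \<union> w ` {i..i + d})" using assms by auto
      assume nin: "w (Suc (i+d)) \<notin> S \<union> w ` {i..i + d}"
      have "?U (i+d) \<notin> F" using nin assms by auto
      moreover have "?U (i+d) \<notin> ?U ` {i..<i + d}"
      proof
        assume "?U (i+d) \<in> ?U ` {i..<i + d}"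
        then obtain j where j: "j \<in> {i..<i + d}" "?U (i+d) = ?U j" by auto
        then have "w (Suc (i+d)) \<in> {w j, w (Suc j)}" by auto
        then show False using nin j by auto
      qed
      ultimately show "\<exists>E\<in>?U ` {i..<i + Suc d} - F. E \<notin> ?U ` {i..<i + d}"
        by (intro bexI[of _ "?U (i+d)"]) auto
    qed
  qed
qed

lemma walk_count:
  fixes w :: "nat \<Rightarrow> 'v"
  assumes "finite S" "\<forall>E\<in>F. E \<subseteq> S" "m \<in> {i..k}" "w m \<in> S"
  shows "card (S \<union> w ` {i..k}) \<le> card S + card ((\<lambda>j. {w j, w (Suc j)}) ` {i..<k} - F)"
proof -
  have "k = i + (k - i)" using assms by auto
  then show ?thesis using walk_count_aux[OF assms(1,2), of m i "k - i" w] assms by metis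
qed


lemma inv_even:
  assumes "finite C" "\<forall>x\<in>C. f x \<in> C \<and> f x \<noteq> x \<and> f (f x) = x"
  shows "even (card C)"
  using assms
proof (induction "card C" arbitrary: C rule: less_induct)
  case less
  show ?case
  proof (cases "C = {}")
    case True then show ?thesis by simp
  next
    case False
    then obtain x where x: "x \<in> C" by auto
    define C' where "C' = C - {x, f x}"
    have fx: "f x \<in> C" "f x \<noteq> x" using less.prems x by auto
    have cc: "card C = card C' + 2"
    proof -
      have "C = insert x (insert (f x) C')" using x fx unfolding C'_def by auto
      moreover have "x \<notin> insert (f x) C'" "f x \<notin> C'" using fx unfolding C'_def by auto
      moreover have "finite C'" using less.prems(1) unfolding C'_def by auto
      ultimately show ?thesis by (metis card_insert_disjoint finite_insert add_2_eq_Suc')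
    qed
    have "\<forall>y\<in>C'. f y \<in> C' \<and> f y \<noteq> y \<and> f (f y) = y"
      using less.prems(2) x unfolding C'_def by (metis Diff_iff insert_iff singletonD)
    moreover have "finite C'" using less.prems(1) unfolding C'_def by auto
    ultimately have "even (card C')" using less.hyps[of C'] cc by simp
    then show ?thesis using cc by simp
  qed
qed

lemma fiber_count:
  assumes "finite A" "\<forall>x\<in>A. 2 \<le> card {y\<in>A. g y = g x}"
  shows "2 * card (g ` A) \<le> card A"
    and "2 * card (g ` A) = card A \<Longrightarrow> \<forall>x\<in>A. card {y\<in>A. g y = g x} = 2"
proof -
  have cA: "card A = (\<Sum>b\<in>g ` A. card {y\<in>A. g y = b})"
    using sum.image_gen[OF assms(1), of "\<lambda>_. 1::nat" g] by simp
  have ge: "\<forall>b\<in>g ` A. 2 \<le> card {y\<in>A. g y = b}" using assms(2) by auto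
  have "(\<Sum>b\<in>g ` A. 2) \<le> (\<Sum>b\<in>g ` A. card {y\<in>A. g y = b})"
    using ge by (intro sum_mono) auto
  then show "2 * card (g ` A) \<le> card A" using cA by simp
  assume eq: "2 * card (g ` A) = card A"
  show "\<forall>x\<in>A. card {y\<in>A. g y = g x} = 2"
  proof (rule ccontr)
    assume "\<not> ?thesis"
    then obtain x where x: "x \<in> A" "card {y\<in>A. g y = g x} \<noteq> 2" by auto
    have "(\<Sum>b\<in>g ` A. 2) < (\<Sum>b\<in>g ` A. card {y\<in>A. g y = b})"
    proof (rule sum_strict_mono_ex1)
      show "finite (g ` A)" using assms by auto
      show "\<forall>b\<in>g ` A. 2 \<le> card {y\<in>A. g y = b}" using ge .
      show "\<exists>b\<in>g ` A. 2 < card {y\<in>A. g y = b}"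
        using x ge by (intro bexI[of _ "g x"]) (auto simp: le_neq_implies_less)
    qed
    then show False using cA eq by simp
  qed
qed

locale cwalk =
  fixes w :: "nat \<Rightarrow> 'v" and n l :: nat
  assumes per: "\<And>j. w (j mod n) = w j"
    and nl: "n = 2*l" and lpos: "0 < l"
    and cardV: "card (w ` {..<n}) = l + 1"
begin

abbreviation U where "U j \<equiv> {w j, w (Suc j)}"

lemma npos: "0 < n" using nl lpos by simp

lemma U_per: "U (j mod n) = U j"
proof -
  have "w (Suc (j mod n)) = w (Suc j)"
    by (metis mod_Suc_eq per)
  then show ?thesis using per[of j] by simp
qed

lemma count_all: "l \<le> card (U ` {..<n})"
proof -
  have "card ({w 0} \<union> w ` {0..n-1}) \<le> card {w 0} + card (U ` {0..<n-1} - {})"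
    by (rule walk_count[of _ _ 0]) auto
  moreover have "{w 0} \<union> w ` {0..n-1} = w ` {..<n}" using npos by auto
  moreover have "card (U ` {0..<n-1}) \<le> card (U ` {..<n})" by (intro card_mono) auto
  ultimately show ?thesis using cardV by simp
qed

end


locale cwalk_f = cwalk +
  fixes f :: "nat \<Rightarrow> nat"
  assumes finv: "\<And>e. e < n \<Longrightarrow> f e < n \<and> f e \<noteq> e \<and> f (f e) = e \<and> U (f e) = U e"
begin

lemma finv_parts:
  assumes "e < n"
  shows "f e < n" "f e \<noteq> e" "f (f e) = e" "U (f e) = U e"
  using finv[OF assms] by auto

lemma fiber_ge: "x < n \<Longrightarrow> 2 \<le> card {y\<in>{..<n}. U y = U x}"
proof -
  assume x: "x < n"
  note fx = finv_parts[OF x]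
  have "{x, f x} \<subseteq> {y\<in>{..<n}. U y = U x}"
    using fx(1,4) x by blast
  then have "card {x, f x} \<le> card {y\<in>{..<n}. U y = U x}" by (intro card_mono) auto
  moreover have "card {x, f x} = 2" using fx(2) by simp
  ultimately show ?thesis by linarith
qed

lemma fiber_U: "e < n \<Longrightarrow> {j\<in>{..<n}. U j = U e} = {e, f e}"
proof -
  assume e: "e < n"
  note fe = finv_parts[OF e]
  have ge: "\<forall>x\<in>{..<n}. 2 \<le> card {y\<in>{..<n}. U y = U x}" using fiber_ge by blast
  have "2 * card (U ` {..<n}) \<le> card {..<n}"
    using fiber_count(1)[OF _ ge] by blast
  then have "2 * card (U ` {..<n}) = card {..<n}"
    using count_all nl by simp
  then have "\<forall>x\<in>{..<n}. card {y\<in>{..<n}. U y = U x} = 2" using fiber_count(2)[OF _ ge] by blast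
  then have c: "card {y\<in>{..<n}. U y = U e} = 2" using e by blast
  have s: "{e, f e} \<subseteq> {y\<in>{..<n}. U y = U e}" using fe(1,4) e by blast
  have c2: "card {e, f e} = 2" using fe(2) by simp
  have "finite {y\<in>{..<n}. U y = U e}" by simp
  then show ?thesis using card_subset_eq[OF _ s] c c2 by simp
qed

lemma cardU: "card (U ` {..<n}) = l"
proof -
  have ge: "\<forall>x\<in>{..<n}. 2 \<le> card {y\<in>{..<n}. U y = U x}" using fiber_ge by blast
  have "2 * card (U ` {..<n}) \<le> card {..<n}"
    using fiber_count(1)[OF _ ge] by blast
  then show ?thesis using count_all nl by simp
qed

lemma cut:
  assumes e: "e < n" and lt: "e < f e"
  shows "w ` {Suc e..f e} \<inter> w ` {Suc (f e)..e+n} = {}"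
proof (rule ccontr)
  define e' where "e' = f e"
  have e': "e' < n" "e < e'" using finv_parts[OF e] lt unfolding e'_def by auto
  assume "w ` {Suc e..f e} \<inter> w ` {Suc (f e)..e+n} \<noteq> {}"
  then obtain x where x: "x \<in> w ` {Suc e..f e}" "x \<in> w ` {Suc (f e)..e+n}" by blast
  then obtain m where m0: "m \<in> {Suc (f e)..e+n}" "x = w m" by blast
  have m: "m \<in> {Suc e'..e+n}" "w m \<in> w ` {Suc e..e'}" using m0 x unfolding e'_def by auto
  define F where "F = U ` {Suc e..<e'}"
  define G where "G = U ` {Suc e'..<e+n}"
  have c1: "card ({w (Suc e)} \<union> w ` {Suc e..e'}) \<le> card {w (Suc e)} + card (U ` {Suc e..<e'} - {})"
    by (rule walk_count[of _ _ "Suc e"]) (use e' in auto)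
  have "{w (Suc e)} \<union> w ` {Suc e..e'} = w ` {Suc e..e'}" using e' by auto
  then have c1: "card (w ` {Suc e..e'}) \<le> 1 + card F" using c1 unfolding F_def by simp
  have c2: "card (w ` {Suc e..e'} \<union> w ` {Suc e'..e+n}) \<le> card (w ` {Suc e..e'}) + card (G - F)"
    unfolding G_def
  proof (rule walk_count[of _ _ m])
    show "\<forall>E\<in>F. E \<subseteq> w ` {Suc e..e'}"
    proof
      fix E assume "E \<in> F"
      then obtain j where j: "j \<in> {Suc e..<e'}" "E = U j" unfolding F_def by (rule imageE)
      then have "j \<in> {Suc e..e'}" "Suc j \<in> {Suc e..e'}" by auto
      then show "E \<subseteq> w ` {Suc e..e'}" using j(2) by blast
    qed
  qed (use m in auto)
  have c3: "w ` {Suc e..e'} \<union> w ` {Suc e'..e+n} = w ` {..<n}"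
  proof
    show "w ` {Suc e..e'} \<union> w ` {Suc e'..e+n} \<subseteq> w ` {..<n}"
    proof
      fix x assume "x \<in> w ` {Suc e..e'} \<union> w ` {Suc e'..e+n}"
      then obtain j where "x = w j" by auto
      then have "x = w (j mod n)" using per by simp
      then show "x \<in> w ` {..<n}" using npos by auto
    qed
    show "w ` {..<n} \<subseteq> w ` {Suc e..e'} \<union> w ` {Suc e'..e+n}"
    proof
      fix x assume "x \<in> w ` {..<n}"
      then obtain j where j: "j < n" "x = w j" by auto
      show "x \<in> w ` {Suc e..e'} \<union> w ` {Suc e'..e+n}"
      proof (cases "Suc e \<le> j")
        case True
        then show ?thesis using j e' by (cases "j \<le> e'") auto
      next
        case False
        have "w (j + n) = w j" using per[of "j+n"] per[of j] by simp
        moreover have "j + n \<in> {Suc e'..e+n}" using False e' by auto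
        ultimately have "x = w (j + n)" "j + n \<in> {Suc e'..e+n}" using j by auto
        then have "x \<in> w ` {Suc e'..e+n}" by (rule image_eqI)
        then show ?thesis by (rule UnI2)
      qed
    qed
  qed
  have c4: "F \<union> G \<subseteq> U ` {..<n} - {U e}"
  proof
    fix E assume EFG: "E \<in> F \<union> G"
    obtain j where j: "j \<in> {Suc e..<e'} \<union> {Suc e'..<e+n}" "E = U j"
    proof (cases "E \<in> F")
      case True
      then obtain j where "j \<in> {Suc e..<e'}" "E = U j" unfolding F_def by (rule imageE)
      then show ?thesis using that by blast
    next
      case False
      then have "E \<in> G" using EFG by blast
      then obtain j where "j \<in> {Suc e'..<e+n}" "E = U j" unfolding G_def by (rule imageE)
      then show ?thesis using that by blast
    qed
    have jm: "j mod n < n" using npos by simp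
    have "j mod n \<noteq> e \<and> j mod n \<noteq> e'"
    proof (cases "j < n")
      case True then show ?thesis using j e' by auto
    next
      case False
      have lt: "j - n < n" using j e' False by auto
      have "j mod n = (j - n) mod n" using False by (simp add: le_mod_geq)
      then have "j mod n = j - n" using lt by simp
      then show ?thesis using j e' False by auto
    qed
    then have "j mod n \<notin> {e, f e}" unfolding e'_def by simp
    then have "j mod n \<notin> {y\<in>{..<n}. U y = U e}" by (subst fiber_U[OF e])
    then have "U (j mod n) \<noteq> U e" using jm by auto
    moreover have "E = U (j mod n)" using j(2) U_per[of j] by simp
    ultimately show "E \<in> U ` {..<n} - {U e}" using jm by blast
  qed
  have "card (F \<union> G) \<le> card (U ` {..<n} - {U e})" using c4 by (intro card_mono) auto
  also have "\<dots> = l - 1" using cardU e by (simp add: card_Diff_singleton)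
  finally have c5: "card (F \<union> G) \<le> l - 1" .
  have "card (F \<union> G) = card F + card (G - F)"
  proof -
    have "F \<union> G = F \<union> (G - F)" by auto
    moreover have "finite F" "finite (G - F)" unfolding F_def G_def by auto
    ultimately show ?thesis using card_Un_disjoint[of F "G - F"] by auto
  qed
  then show False using c1 c2 c3 c5 cardV lpos by simp
qed

lemma disjD: "X \<inter> Y = {} \<Longrightarrow> x \<in> X \<Longrightarrow> x \<in> Y \<Longrightarrow> False" by auto

lemma rev_par_lt:
  assumes e: "e < n" and lt: "e < f e"
  shows "w (f e) = w (Suc e) \<and> w (Suc (f e)) = w e \<and> (odd e \<noteq> odd (f e))"
proof -
  define e' where "e' = f e"
  note fe = finv_parts[OF e]
  have e': "e' < n" "e < e'" using fe(1) lt unfolding e'_def by auto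
  have D: "w ` {Suc e..e'} \<inter> w ` {Suc e'..e+n} = {}" using cut[OF e lt] unfolding e'_def .
  have A2: "w e' \<in> w ` {Suc e..e'}" using e' by auto
  have "w (e + n) = w e" using per[of "e+n"] per[of e] by simp
  moreover have "e + n \<in> {Suc e'..e+n}" using e' by auto
  ultimately have B2: "w e \<in> w ` {Suc e'..e+n}" by (rule image_eqI[OF sym])
  have ne: "w e \<noteq> w e'" using disjD[OF D _ B2] A2 by metis
  have UU: "{w e', w (Suc e')} = {w e, w (Suc e)}" using fe(4) unfolding e'_def by simp
  have "w e \<in> {w e', w (Suc e')}" by (subst UU) simp
  then have r1: "w e = w (Suc e')" using ne by simp
  have "w e' \<in> {w e, w (Suc e)}" by (subst UU[symmetric]) simp
  then have r2: "w e' = w (Suc e)" using ne by simp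
  define C where "C = {Suc e..<e'}"
  have "\<forall>g\<in>C. f g \<in> C \<and> f g \<noteq> g \<and> f (f g) = g"
  proof
    fix g assume g: "g \<in> C"
    then have gn: "g < n" using e' unfolding C_def by auto
    note fg = finv_parts[OF gn]
    have "f g \<in> C"
    proof (rule ccontr)
      assume nC: "f g \<notin> C"
      have "f g \<noteq> e" using fe(3) fg(3) g unfolding C_def e'_def by auto
      moreover have "f g \<noteq> e'" using fe(3) fg(3) g unfolding C_def e'_def by auto
      ultimately have cases: "f g < e \<or> e' < f g" using nC unfolding C_def by auto
      have "w (f g) \<in> U (f g)" by simp
      then have "w (f g) \<in> U g" by (subst fg(4)[symmetric])
      moreover have "U g \<subseteq> w ` {Suc e..e'}" using g unfolding C_def by auto
      ultimately have inA: "w (f g) \<in> w ` {Suc e..e'}" by (rule rev_subsetD)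
      have inB: "w (f g) \<in> w ` {Suc e'..e+n}"
      proof (cases "f g < e")
        case True
        have "w (f g + n) = w (f g)" using per[of "f g + n"] per[of "f g"] by simp
        moreover have "f g + n \<in> {Suc e'..e+n}" using True e' by auto
        ultimately show ?thesis by (rule image_eqI[OF sym])
      next
        case False
        then have "f g \<in> {Suc e'..e+n}" using cases fg(1) by auto
        then show ?thesis by (rule imageI)
      qed
      show False using disjD[OF D inA inB] .
    qed
    then show "f g \<in> C \<and> f g \<noteq> g \<and> f (f g) = g" using fg(2,3) by simp
  qed
  note inv = this
  have "finite C" by (simp add: C_def)
  then have "even (card C)" using inv by (rule inv_even)
  then have "even (e' - Suc e)" unfolding C_def by simp
  then have "odd e \<noteq> odd e'" using e' by presburger
  then show ?thesis using r1 r2 unfolding e'_def by simp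
qed

lemma rev_par:
  assumes e: "e < n"
  shows "w (f e) = w (Suc e) \<and> w (Suc (f e)) = w e \<and> (odd e \<noteq> odd (f e))"
proof (cases "e < f e")
  case True then show ?thesis using rev_par_lt[OF e] by simp
next
  case False
  note fe = finv_parts[OF e]
  have lt: "f e < f (f e)" using False fe(2,3) by auto
  show ?thesis using rev_par_lt[OF fe(1) lt] fe(3) by auto
qed

end


lemma interleave_Cons: "interleave (a # as) (b # bs) = a # b # interleave as bs"
  by (simp add: interleave_def)

lemma interleave_len: "length is = length ks \<Longrightarrow> length (interleave is ks) = 2 * length is"
proof (induction "is" arbitrary: ks)
  case Nil then show ?case by (simp add: interleave_def)
next
  case (Cons a as)
  then obtain b bs where "ks = b # bs" by (cases ks) auto
  then show ?case using Cons by (simp add: interleave_Cons)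
qed

lemma interleave_set: "length is = length ks \<Longrightarrow> set (interleave is ks) = set is \<union> set ks"
proof (induction "is" arbitrary: ks)
  case Nil then show ?case by (simp add: interleave_def)
next
  case (Cons a as)
  then obtain b bs where "ks = b # bs" by (cases ks) auto
  then show ?case using Cons by (auto simp: interleave_Cons)
qed

lemma interleave_nth: "length is = length ks \<Longrightarrow> m < length is \<Longrightarrow>
  interleave is ks ! (2*m) = is ! m \<and> interleave is ks ! (Suc (2*m)) = ks ! m"
proof (induction "is" arbitrary: ks m)
  case Nil then show ?case by simp
next
  case (Cons a as)
  then obtain b bs where ks: "ks = b # bs" by (cases ks) auto
  show ?case
  proof (cases m)
    case 0 then show ?thesis using ks by (simp add: interleave_Cons)
  next
    case (Suc m')
    have "2 * m = Suc (Suc (2 * m'))" using Suc by simp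
    then show ?thesis using Cons.IH[of bs m'] Cons.prems ks Suc by (simp add: interleave_Cons)
  qed
qed

lemma comb_main:
  fixes "is" ks :: "'v list" and l :: nat
  assumes lens: "length is = l" "length ks = l" and lpos: "0 < l"
    and cardV: "card (set is \<union> set ks) = l + 1"
  defines "xs \<equiv> interleave is ks"
  defines "n \<equiv> 2 * l"
  defines "w \<equiv> \<lambda>j. xs ! (j mod n)"
  defines "var \<equiv> \<lambda>e. if even e then (w e, w (Suc e)) else (w (Suc e), w e)"
  defines "c \<equiv> \<lambda>p. card {e\<in>{..<n}. var e = p}"
  shows "balanced (circuit_graph xs) \<longleftrightarrow> (\<forall>p\<in>var ` {..<n}. 2 \<le> c p)"
    and "(\<forall>p\<in>var ` {..<n}. 2 \<le> c p) \<Longrightarrow> (\<forall>p\<in>var ` {..<n}. c p = 2)"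
proof -
  have lenxs: "length xs = n" unfolding xs_def n_def using interleave_len[of "is" ks] lens by simp
  have npos: "0 < n" using lpos n_def by simp
  have wj: "j < n \<Longrightarrow> w j = xs ! j" for j unfolding w_def by simp
  have wimg: "w ` {..<n} = set xs"
  proof -
    have "w ` {..<n} = (\<lambda>j. xs ! j) ` {..<n}" using wj by (intro image_cong) auto
    also have "\<dots> = set xs" using lenxs by (auto simp: set_conv_nth)
    finally show ?thesis .
  qed
  have setxs: "set xs = set is \<union> set ks" unfolding xs_def by (rule interleave_set) (simp add: lens)
  interpret cwalk w n l
  proof
    show "w (j mod n) = w j" for j unfolding w_def by simp
    show "n = 2 * l" by (simp add: n_def)
    show "0 < l" by (rule lpos)
    show "card (w ` {..<n}) = l + 1" using wimg setxs cardV by simp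
  qed
  define h :: "'v \<times> 'v \<Rightarrow> 'v set" where "h = (\<lambda>p. {fst p, snd p})"
  have Uvar: "U e = h (var e)" for e unfolding h_def var_def by auto
  have bal_iff: "balanced (circuit_graph xs) \<longleftrightarrow>
     (\<exists>f. \<forall>e<n. f e < n \<and> f e \<noteq> e \<and> f (f e) = e \<and> w (Suc e) = w (f e) \<and> w (Suc (f e)) = w e)"
  proof -
    have "balanced (circuit_graph xs) \<longleftrightarrow>
     (\<exists>f. \<forall>e\<in>{..<n}. f e \<in> {..<n} \<and> f e \<noteq> e \<and> f (f e) = e \<and> xs ! (Suc e mod n) = xs ! (f e)
        \<and> xs ! (Suc (f e) mod n) = xs ! e)"
      unfolding balanced_def circuit_graph_def lenxs by simp
    also have "\<dots> \<longleftrightarrow> (\<exists>f. \<forall>e<n. f e < n \<and> f e \<noteq> e \<and> f (f e) = e \<and> w (Suc e) = w (f e) \<and> w (Suc (f e)) = w e)"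
    proof -
      have "\<And>f e. e < n \<Longrightarrow> f e < n \<Longrightarrow> (xs ! (Suc e mod n) = xs ! (f e) \<and> xs ! (Suc (f e) mod n) = xs ! e)
         = (w (Suc e) = w (f e) \<and> w (Suc (f e)) = w e)"
        unfolding w_def by simp
      then show ?thesis by (metis lessThan_iff)
    qed
    finally show ?thesis .
  qed
  have fin: "finite {..<n}" by simp
  have cP: "(\<forall>p\<in>var ` {..<n}. 2 \<le> c p) \<Longrightarrow> (\<forall>p\<in>var ` {..<n}. c p = 2)"
  proof -
    assume ge: "\<forall>p\<in>var ` {..<n}. 2 \<le> c p"
    then have ge': "\<forall>x\<in>{..<n}. 2 \<le> card {y\<in>{..<n}. var y = var x}" unfolding c_def by auto
    have "U ` {..<n} = h ` var ` {..<n}" using Uvar by (auto simp: image_iff)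
    then have "card (U ` {..<n}) \<le> card (var ` {..<n})" by (metis card_image_le finite_imageI fin)
    then have "2 * card (var ` {..<n}) = card {..<n}"
      using fiber_count(1)[OF fin ge'] count_all n_def by simp
    then have "\<forall>x\<in>{..<n}. card {y\<in>{..<n}. var y = var x} = 2" using fiber_count(2)[OF fin ge'] by blast
    then show "\<forall>p\<in>var ` {..<n}. c p = 2" unfolding c_def by auto
  qed
  then show "(\<forall>p\<in>var ` {..<n}. 2 \<le> c p) \<Longrightarrow> (\<forall>p\<in>var ` {..<n}. c p = 2)" .
  show "balanced (circuit_graph xs) \<longleftrightarrow> (\<forall>p\<in>var ` {..<n}. 2 \<le> c p)"
  proof
    assume "balanced (circuit_graph xs)"
    then obtain f where f: "\<And>e. e < n \<Longrightarrow> f e < n \<and> f e \<noteq> e \<and> f (f e) = e \<and> w (Suc e) = w (f e) \<and> w (Suc (f e)) = w e"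
      using bal_iff by blast
    interpret cwalk_f w n l f
    proof
      fix e assume e: "e < n"
      note fe = f[OF e]
      have "U (f e) = U e" using fe by auto
      then show "f e < n \<and> f e \<noteq> e \<and> f (f e) = e \<and> U (f e) = U e" using fe by blast
    qed
    show "\<forall>p\<in>var ` {..<n}. 2 \<le> c p"
    proof
      fix p assume "p \<in> var ` {..<n}"
      then obtain e where e: "e < n" "p = var e" by auto
      note fe = f[OF e(1)]
      note rp = rev_par[OF e(1)]
      have "var (f e) = var e"
      proof (cases "even e")
        case True
        then have "odd (f e)" using rp by auto
        then show ?thesis using True rp unfolding var_def by auto
      next
        case False
        then have "even (f e)" using rp by auto
        then show ?thesis using False rp unfolding var_def by auto
      qed
      then have "{e, f e} \<subseteq> {y\<in>{..<n}. var y = p}" using e fe by auto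
      then have "card {e, f e} \<le> c p" unfolding c_def by (intro card_mono) auto
      then show "2 \<le> c p" using fe by simp
    qed
  next
    assume ge: "\<forall>p\<in>var ` {..<n}. 2 \<le> c p"
    have c2: "\<And>e. e < n \<Longrightarrow> card {y\<in>{..<n}. var y = var e} = 2" using cP[OF ge] unfolding c_def by auto
    define f where "f = (\<lambda>e. SOME e'. e' \<in> {y\<in>{..<n}. var y = var e} \<and> e' \<noteq> e)"
    have fprop: "f e \<in> {y\<in>{..<n}. var y = var e} \<and> f e \<noteq> e" if e: "e < n" for e
    proof -
      obtain a b where ab: "{y\<in>{..<n}. var y = var e} = {a, b}" "a \<noteq> b"
        using c2[OF e] card_2_iff by metis
      have "e \<in> {a, b}" using e ab(1) by blast
      then have "\<exists>e'. e' \<in> {y\<in>{..<n}. var y = var e} \<and> e' \<noteq> e" using ab by blast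
      then show ?thesis unfolding f_def by (rule someI_ex)
    qed
    have ffe: "f (f e) = e" if e: "e < n" for e
    proof -
      have A: "f e < n" "var (f e) = var e" "f e \<noteq> e" using fprop[OF e] by auto
      have B: "f (f e) < n" "var (f (f e)) = var e" "f (f e) \<noteq> f e" using fprop[OF A(1)] A by auto
      obtain a b where ab: "{y\<in>{..<n}. var y = var e} = {a, b}" "a \<noteq> b"
        using c2[OF e] card_2_iff by metis
      have "e \<in> {a,b}" "f e \<in> {a,b}" "f (f e) \<in> {a,b}" using ab(1) e A B by blast+
      then show ?thesis using A(3) B(3) by auto
    qed
    interpret cwalk_f w n l f
    proof
      fix e assume e: "e < n"
      have A: "f e < n" "var (f e) = var e" "f e \<noteq> e" using fprop[OF e] by auto
      have "U (f e) = U e" using Uvar A(2) by metis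
      then show "f e < n \<and> f e \<noteq> e \<and> f (f e) = e \<and> U (f e) = U e" using A ffe[OF e] by blast
    qed
    show "balanced (circuit_graph xs)" unfolding bal_iff
    proof (intro exI allI impI)
      fix e assume e: "e < n"
      note rp = rev_par[OF e]
      show "f e < n \<and> f e \<noteq> e \<and> f (f e) = e \<and> w (Suc e) = w (f e) \<and> w (Suc (f e)) = w e"
        using finv_parts[OF e] rp by simp
    qed
  qed
qed


lemma abs_pow_bound:
  fixes y :: real
  assumes "k \<le> 2 * l"
  shows "\<bar>y\<bar> ^ k \<le> 1 + y ^ (2 * l)"
proof (cases "\<bar>y\<bar> \<le> 1")
  case True
  then have "\<bar>y\<bar> ^ k \<le> 1" by (simp add: power_le_one)
  moreover have "0 \<le> y ^ (2 * l)" by (simp add: zero_le_even_power)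
  ultimately show ?thesis by linarith
next
  case False
  then have "\<bar>y\<bar> ^ k \<le> \<bar>y\<bar> ^ (2 * l)" using assms by (intro power_increasing) auto
  also have "\<dots> = y ^ (2 * l)" by (simp add: power_even_abs)
  finally show ?thesis by linarith
qed

lemma prod_pairs: "(\<Prod>e<2*l. g e) = (\<Prod>m<l. g (2*m) * g (Suc (2*m)))" for g :: "nat \<Rightarrow> 'b::comm_monoid_mult"
proof (induction l)
  case 0 then show ?case by simp
next
  case (Suc l)
  have "2 * Suc l = Suc (Suc (2 * l))" by simp
  then show ?case using Suc by (simp add: mult.assoc)
qed

theorem lemma4p5:
  fixes M :: "'a measure" and Y :: "nat \<Rightarrow> nat \<Rightarrow> 'a \<Rightarrow> real"
    and l :: nat and V :: "nat set" and "is" ks :: "nat list"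
  assumes "prob_space M"
    and indep: "prob_space.indep_vars M (\<lambda>_. borel) (\<lambda>(i, j). Y i j) UNIV"
    and ident: "\<And>i j. distr M borel (Y i j) = distr M borel (Y 1 1)"
    and mean: "prob_space.expectation M (Y 1 1) = 0"
    and var: "prob_space.expectation M (\<lambda>\<omega>. (Y 1 1 \<omega>)^2) = 1"
    and moment: "integrable M (\<lambda>\<omega>. (Y 1 1 \<omega>) ^ (2 * l))"
    and V: "finite V" "card V = l + 1"
    and lens: "length is = l" "length ks = l"
    and sub: "set is \<subseteq> V" "set ks \<subseteq> V"
    and cover: "set is \<union> set ks = V"
  shows "prob_space.expectation M
           (\<lambda>\<omega>. \<Prod>m<l. Y (is ! m) (ks ! m) \<omega> * Y (is ! (Suc m mod l)) (ks ! m) \<omega>)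
         = (if circuit_graph (interleave is ks) \<in> balanced_trees V then 1 else 0)"
proof -
  interpret P: prob_space M by fact
  have lpos: "0 < l"
  proof (rule ccontr)
    assume "\<not> 0 < l"
    then have "l = 0" by simp
    then have "V = {}" using cover lens by simp
    then show False using V by simp
  qed
  define xs where "xs = interleave is ks"
  define n where "n = 2 * l"
  define w where "w = (\<lambda>j. xs ! (j mod n))"
  define var where "var = (\<lambda>e. if even e then (w e, w (Suc e)) else (w (Suc e), w e))"
  define c where "c = (\<lambda>p. card {e\<in>{..<n}. var e = p})"
  define Z where "Z = (\<lambda>p::nat\<times>nat. case p of (i, j) \<Rightarrow> Y i j)"
  define Pv where "Pv = var ` {..<n}"
  define \<mu> where "\<mu> = (\<lambda>k. P.expectation (\<lambda>\<omega>. Y 1 1 \<omega> ^ k))"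
  have cardV: "card (set is \<union> set ks) = l + 1" using cover V by simp
  have cm1: "balanced (circuit_graph xs) \<longleftrightarrow> (\<forall>p\<in>Pv. 2 \<le> c p)"
    using comb_main(1)[OF lens lpos cardV] unfolding Pv_def c_def var_def w_def n_def xs_def .
  have cm2: "(\<forall>p\<in>Pv. 2 \<le> c p) \<Longrightarrow> (\<forall>p\<in>Pv. c p = 2)"
    using comb_main(2)[OF lens lpos cardV] unfolding Pv_def c_def var_def w_def n_def xs_def .
  have lenxs: "length xs = n" unfolding xs_def n_def using interleave_len[of "is" ks] lens by simp
  have rv: "Y i j \<in> borel_measurable M" for i j
    using indep unfolding P.indep_vars_def by (metis (no_types, lifting) UNIV_I case_prod_conv)
  have int11: "integrable M (\<lambda>\<omega>. Y 1 1 \<omega> ^ k)" if k: "k \<le> 2 * l" for k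
  proof (rule Bochner_Integration.integrable_bound)
    show "integrable M (\<lambda>\<omega>. 1 + Y 1 1 \<omega> ^ (2 * l))" using moment by simp
    show "(\<lambda>\<omega>. Y 1 1 \<omega> ^ k) \<in> borel_measurable M" using rv by simp
    show "AE \<omega> in M. norm (Y 1 1 \<omega> ^ k) \<le> norm (1 + Y 1 1 \<omega> ^ (2 * l))"
    proof (rule AE_I2)
      fix \<omega>
      have "0 \<le> Y 1 1 \<omega> ^ (2 * l)" by (simp add: zero_le_even_power)
      then show "norm (Y 1 1 \<omega> ^ k) \<le> norm (1 + Y 1 1 \<omega> ^ (2 * l))"
        using abs_pow_bound[OF k, of "Y 1 1 \<omega>"] by (simp add: power_abs)
    qed
  qed
  have mom: "integrable M (\<lambda>\<omega>. Y i j \<omega> ^ k) \<and> P.expectation (\<lambda>\<omega>. Y i j \<omega> ^ k) = \<mu> k"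
    if k: "k \<le> 2 * l" for i j k
  proof -
    have m: "(\<lambda>x::real. x ^ k) \<in> borel_measurable borel" by simp
    have "integrable (distr M borel (Y 1 1)) (\<lambda>x. x ^ k)"
      using integrable_distr_eq[OF rv m] int11[OF k] by simp
    then have "integrable (distr M borel (Y i j)) (\<lambda>x. x ^ k)" using ident[of i j] by simp
    then have I: "integrable M (\<lambda>\<omega>. Y i j \<omega> ^ k)" using integrable_distr_eq[OF rv m] by simp
    have "P.expectation (\<lambda>\<omega>. Y i j \<omega> ^ k) = integral\<^sup>L (distr M borel (Y i j)) (\<lambda>x. x ^ k)"
      using integral_distr[OF rv m] by simp
    also have "\<dots> = integral\<^sup>L (distr M borel (Y 1 1)) (\<lambda>x. x ^ k)" using ident[of i j] by simp
    also have "\<dots> = \<mu> k" unfolding \<mu>_def using integral_distr[OF rv m] by simp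
    finally show ?thesis using I by simp
  qed
  have wj: "w (2 * m) = is ! m \<and> w (Suc (2 * m)) = ks ! m" if m: "m < l" for m
  proof -
    have lt: "2 * m < n" "Suc (2 * m) < n" using m n_def by auto
    have a: "w (2 * m) = xs ! (2 * m)" unfolding w_def using lt(1) by (simp only: mod_less)
    have b: "w (Suc (2 * m)) = xs ! (Suc (2 * m))" unfolding w_def using lt(2) by (simp only: mod_less)
    have "xs ! (2*m) = is ! m \<and> xs ! (Suc (2*m)) = ks ! m"
      unfolding xs_def by (rule interleave_nth) (use lens m in auto)
    then show ?thesis using a b by simp
  qed
  have wj2: "w (Suc (Suc (2 * m))) = is ! (Suc m mod l)" if m: "m < l" for m
  proof -
    have "Suc (Suc (2 * m)) = 2 * Suc m" by simp
    then have "Suc (Suc (2 * m)) mod n = 2 * (Suc m mod l)" unfolding n_def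
      by (simp only: mult_mod_right)
    then have a: "w (Suc (Suc (2 * m))) = xs ! (2 * (Suc m mod l))" unfolding w_def by simp
    have "Suc m mod l < l" using lpos by simp
    then have "xs ! (2 * (Suc m mod l)) = is ! (Suc m mod l)"
      unfolding xs_def using interleave_nth[of "is" ks "Suc m mod l"] lens by simp
    then show ?thesis using a by simp
  qed
  have prodeq: "(\<Prod>m<l. Y (is ! m) (ks ! m) \<omega> * Y (is ! (Suc m mod l)) (ks ! m) \<omega>)
      = (\<Prod>p\<in>Pv. Z p \<omega> ^ c p)" for \<omega>
  proof -
    have "(\<Prod>m<l. Y (is ! m) (ks ! m) \<omega> * Y (is ! (Suc m mod l)) (ks ! m) \<omega>)
        = (\<Prod>m<l. Z (var (2*m)) \<omega> * Z (var (Suc (2*m))) \<omega>)"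
    proof (rule prod.cong)
      fix m assume "m \<in> {..<l}"
      then have m: "m < l" by simp
      show "Y (is ! m) (ks ! m) \<omega> * Y (is ! (Suc m mod l)) (ks ! m) \<omega> = Z (var (2*m)) \<omega> * Z (var (Suc (2*m))) \<omega>"
        unfolding Z_def var_def using wj[OF m] wj2[OF m] by simp
    qed simp
    also have "\<dots> = (\<Prod>e<n. Z (var e) \<omega>)" unfolding n_def by (rule prod_pairs[symmetric])
    also have "\<dots> = (\<Prod>p\<in>Pv. \<Prod>e\<in>{e\<in>{..<n}. var e = p}. Z (var e) \<omega>)"
      unfolding Pv_def by (rule prod.image_gen) simp
    also have "\<dots> = (\<Prod>p\<in>Pv. Z p \<omega> ^ c p)"
    proof (rule prod.cong)
      fix p assume "p \<in> Pv"
      have "(\<Prod>e\<in>{e\<in>{..<n}. var e = p}. Z (var e) \<omega>) = (\<Prod>e\<in>{e\<in>{..<n}. var e = p}. Z p \<omega>)"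
        by (rule prod.cong) auto
      then show "(\<Prod>e\<in>{e\<in>{..<n}. var e = p}. Z (var e) \<omega>) = Z p \<omega> ^ c p" unfolding c_def by simp
    qed simp
    finally show ?thesis .
  qed
  have cle: "1 \<le> c p \<and> c p \<le> 2 * l" if p: "p \<in> Pv" for p
  proof -
    obtain e where e: "e < n" "p = var e" using p unfolding Pv_def by auto
    have "{e} \<subseteq> {e\<in>{..<n}. var e = p}" using e by auto
    then have "card {e} \<le> c p" unfolding c_def by (intro card_mono) auto
    moreover have "c p \<le> card {..<n}" unfolding c_def by (intro card_mono) auto
    ultimately show ?thesis using n_def by simp
  qed
  have finPv: "finite Pv" unfolding Pv_def by simp
  have ind: "P.indep_vars (\<lambda>_. borel) (\<lambda>p \<omega>. Z p \<omega> ^ c p) Pv"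
  proof -
    have "P.indep_vars (\<lambda>_. borel) (\<lambda>p \<omega>. (\<lambda>x::real. x ^ c p) (Z p \<omega>)) UNIV"
      using P.indep_vars_compose2[OF indep, of "\<lambda>p x. x ^ c p" "\<lambda>_. borel"] unfolding Z_def by simp
    then show ?thesis by (rule P.indep_vars_subset) simp
  qed
  have intZ: "integrable M (\<lambda>\<omega>. Z p \<omega> ^ c p)" if "p \<in> Pv" for p
    using mom[of "c p" "fst p" "snd p"] cle[OF that] unfolding Z_def by (simp add: case_prod_beta)
  have EZ: "P.expectation (\<lambda>\<omega>. Z p \<omega> ^ c p) = \<mu> (c p)" if "p \<in> Pv" for p
    using mom[of "c p" "fst p" "snd p"] cle[OF that] unfolding Z_def by (simp add: case_prod_beta)
  have "P.expectation (\<lambda>\<omega>. \<Prod>m<l. Y (is ! m) (ks ! m) \<omega> * Y (is ! (Suc m mod l)) (ks ! m) \<omega>)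
      = P.expectation (\<lambda>\<omega>. \<Prod>p\<in>Pv. Z p \<omega> ^ c p)" using prodeq by simp
  also have "\<dots> = (\<Prod>p\<in>Pv. P.expectation (\<lambda>\<omega>. Z p \<omega> ^ c p))"
    by (rule P.indep_vars_lebesgue_integral[OF finPv ind intZ])
  also have "\<dots> = (\<Prod>p\<in>Pv. \<mu> (c p))" using EZ by (rule prod.cong[OF refl])
  finally have E: "P.expectation (\<lambda>\<omega>. \<Prod>m<l. Y (is ! m) (ks ! m) \<omega> * Y (is ! (Suc m mod l)) (ks ! m) \<omega>)
      = (\<Prod>p\<in>Pv. \<mu> (c p))" .
  have \<mu>1: "\<mu> 1 = 0" unfolding \<mu>_def using mean by simp
  have \<mu>2: "\<mu> 2 = 1" unfolding \<mu>_def using var by simp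
  have inT: "circuit_graph xs \<in> balanced_trees V \<longleftrightarrow> balanced (circuit_graph xs)"
  proof -
    have "is_route V (2 * (card V - 1)) xs"
      unfolding is_route_def using V lenxs n_def lpos interleave_set[of "is" ks] lens cover xs_def by simp
    then have "circuit_graph xs \<in> circuits V (2 * (card V - 1))" unfolding circuits_def by blast
    then show ?thesis unfolding balanced_trees_def by simp
  qed
  show ?thesis
  proof (cases "\<forall>p\<in>Pv. 2 \<le> c p")
    case True
    then have "\<forall>p\<in>Pv. c p = 2" using cm2 by blast
    then have "(\<Prod>p\<in>Pv. \<mu> (c p)) = 1" using \<mu>2 by simp
    moreover have "circuit_graph (interleave is ks) \<in> balanced_trees V"
      using inT cm1 True unfolding xs_def by simp
    ultimately show ?thesis using E by simp
  next
    case False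
    then obtain p where p: "p \<in> Pv" "c p < 2" by auto
    then have "c p = 1" using cle[OF p(1)] by simp
    then have "(\<Prod>p\<in>Pv. \<mu> (c p)) = 0" using p(1) finPv \<mu>1 by (metis prod_zero_iff)
    moreover have "circuit_graph (interleave is ks) \<notin> balanced_trees V"
      using inT cm1 False unfolding xs_def by simp
    ultimately show ?thesis using E by simp
  qed
qed

end
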